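(* For every synchronous one-dimensional cellular automaton $A=(S,N,f,\mathbb{Z})$ with first neighbors neighborhood $N=(-1,0,1)$, there is an asynchronous cellular automaton $\mathbb{B}=(S\times\{1,2,3\},N,f',\mathbb{Z})$ which invariantly simulates $A$ in $1.5$-linear time, i.e. with integers $k,l$ satisfying $l/k=3/2$ in the definition of invariant simulation.
   Context: A one-dimensional cellular automaton (CA) $(S,N,f,\mathbb{Z})$: finite state set $S$, neighborhood vector $N=(n_1,\dots,n_k)$, local rule $f:S^k\to S$; configurations $c:\mathbb{Z}\to S$; global map $G(c)(i)=f(c(i+n_1),\dots,c(i+n_k))$. An asynchronous CA (ACA) evolves under an update schedule $\zeta:\mathbb{N}\to\mathcal{P}(\mathbb{Z})$ in which every cell appears in infinitely many $\zeta(t)$, via $c_{t+1}=G_{\zeta(t)}(c_t)$, with $G_D(c)(i)=G(c)(i)$ if $i\in D$ and $c(i)$ otherwise. The update history from $c_0$ is the sequence $h_0=c_0,h_1,\dots$ where $h_t(i)$ is the state of cell $i$ after its $t$-th genuine state change (undefined if there is none). $\mathbb{B}$ has invariant histories on $c_0$ if every update schedule gives the same history. Direct simulation: $F_A\prec F_B$ if there is $\psi:S^A\to\mathcal{P}(S')\setminus\{\varnothing\}$ with pairwise disjoint images such that for every configuration $c$, $\{F_B(c'):c'\in\psi(c)\}\subseteq\psi(F_A(c))$, where $\psi(c)=\{c': c'(i)\in\psi(c(i))\ \forall i\}$. Unpacking map $o_m$ ($m$ a positive integer): the bijection $(S^{m})^{\mathbb{Z}}\to S^{\mathbb{Z}}$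 with $o_m(c)(mi+r)=c(i)(r)$, $r\in\mathbb{Z}_m$. Translation: $\tau_v(c)(i)=c(i-v)$. Let $H^B$ map each cell in state $h_t(i)$ to $h_{t+1}(i)$ of its invariant update history under $\mathbb{B}$ (undefined where histories are not invariant). $\mathbb{B}$ invariantly simulates $A$ if there exist $m$, $o_m$, a translation $\tau_v$ and positive integers $k,l$ with $(G^A)^k\prec o_m^{-1}\circ(H^B)^l\circ o_m\circ\tau_v$; $l/k$ is the linear time parameter. *)

theory Defs
  imports Complex_Main
begin

datatype three = Q1 | Q2 | Q3

definition sync_global :: "('s \<Rightarrow> 's \<Rightarrow> 's \<Rightarrow> 's) \<Rightarrow> (int \<Rightarrow> 's) \<Rightarrow> (int \<Rightarrow> 's)" where
  "sync_global f c = (\<lambda>i. f (c (i - 1)) (c i) (c (i + 1)))"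

definition async_global :: "('s \<Rightarrow> 's \<Rightarrow> 's \<Rightarrow> 's) \<Rightarrow> int set \<Rightarrow> (int \<Rightarrow> 's) \<Rightarrow> (int \<Rightarrow> 's)" where
  "async_global f D c = (\<lambda>i. if i \<in> D then f (c (i - 1)) (c i) (c (i + 1)) else c i)"

definition admissible_schedule :: "(nat \<Rightarrow> int set) \<Rightarrow> bool" where
  "admissible_schedule \<zeta> = (\<forall>i. infinite {t. i \<in> \<zeta> t})"

primrec async_run :: "('s \<Rightarrow> 's \<Rightarrow> 's \<Rightarrow> 's) \<Rightarrow> (nat \<Rightarrow> int set) \<Rightarrow> (int \<Rightarrow> 's) \<Rightarrow> nat \<Rightarrow> (int \<Rightarrow> 's)" where
  "async_run f \<zeta> c0 0 = c0"
| "async_run f \<zeta> c0 (Suc t) = async_global f (\<zeta> t) (async_run f \<zeta> c0 t)"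

definition n_changes :: "('s \<Rightarrow> 's \<Rightarrow> 's \<Rightarrow> 's) \<Rightarrow> (nat \<Rightarrow> int set) \<Rightarrow> (int \<Rightarrow> 's) \<Rightarrow> int \<Rightarrow> nat \<Rightarrow> nat" where
  "n_changes f \<zeta> c0 i s = card {u. u < s \<and> async_run f \<zeta> c0 (Suc u) i \<noteq> async_run f \<zeta> c0 u i}"

text \<open>Update history: h_t(i) is the state of cell i after its t-th genuine change
(h_0 = c0), None if cell i changes fewer than t times.\<close>
definition update_history :: "('s \<Rightarrow> 's \<Rightarrow> 's \<Rightarrow> 's) \<Rightarrow> (nat \<Rightarrow> int set) \<Rightarrow> (int \<Rightarrow> 's) \<Rightarrow> nat \<Rightarrow> int \<Rightarrow> 's option" where
  "update_history f \<zeta> c0 t i =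
     (if \<exists>s. n_changes f \<zeta> c0 i s = t
      then Some (async_run f \<zeta> c0 (LEAST s. n_changes f \<zeta> c0 i s = t) i)
      else None)"

definition invariant_histories :: "('s \<Rightarrow> 's \<Rightarrow> 's \<Rightarrow> 's) \<Rightarrow> (int \<Rightarrow> 's) \<Rightarrow> bool" where
  "invariant_histories f c0 =
     (\<forall>\<zeta>1 \<zeta>2. admissible_schedule \<zeta>1 \<and> admissible_schedule \<zeta>2 \<longrightarrow>
        update_history f \<zeta>1 c0 = update_history f \<zeta>2 c0)"

text \<open>The synchronous schedule (\<lambda>_. UNIV) is admissible, so it computes the invariant history.\<close>
definition H_map :: "('s \<Rightarrow> 's \<Rightarrow> 's \<Rightarrow> 's) \<Rightarrow> (int \<Rightarrow> 's) \<Rightarrow> (int \<Rightarrow> 's) option" where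
  "H_map f c =
     (if invariant_histories f c \<and> (\<forall>i. update_history f (\<lambda>_. UNIV) c 1 i \<noteq> None)
      then Some (\<lambda>i. the (update_history f (\<lambda>_. UNIV) c 1 i))
      else None)"

primrec opt_iter :: "('a \<Rightarrow> 'a option) \<Rightarrow> nat \<Rightarrow> 'a \<Rightarrow> 'a option" where
  "opt_iter F 0 c = Some c"
| "opt_iter F (Suc n) c = Option.bind (opt_iter F n c) F"

definition unpack :: "nat \<Rightarrow> (int \<Rightarrow> 'a list) \<Rightarrow> (int \<Rightarrow> 'a)" where
  "unpack m c = (\<lambda>j. c (j div int m) ! nat (j mod int m))"

definition pack :: "nat \<Rightarrow> (int \<Rightarrow> 'a) \<Rightarrow> (int \<Rightarrow> 'a list)" where
  "pack m d = (\<lambda>i. map (\<lambda>r. d (int m * i + int r)) [0..<m])"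

definition translate :: "int \<Rightarrow> (int \<Rightarrow> 'a) \<Rightarrow> (int \<Rightarrow> 'a)" where
  "translate v c = (\<lambda>i. c (i - v))"

definition cfg_set :: "('s \<Rightarrow> 'b set) \<Rightarrow> (int \<Rightarrow> 's) \<Rightarrow> (int \<Rightarrow> 'b) set" where
  "cfg_set \<psi> c = {c'. \<forall>i. c' i \<in> \<psi> (c i)}"

definition direct_sim :: "'b set \<Rightarrow> ((int \<Rightarrow> 's) \<Rightarrow> (int \<Rightarrow> 's)) \<Rightarrow> ((int \<Rightarrow> 'b) \<Rightarrow> (int \<Rightarrow> 'b) option) \<Rightarrow> bool" where
  "direct_sim S' FA FB =
     (\<exists>\<psi> :: 's \<Rightarrow> 'b set.
        (\<forall>s. \<psi> s \<noteq> {} \<and> \<psi> s \<subseteq> S') \<and>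
        (\<forall>s1 s2. s1 \<noteq> s2 \<longrightarrow> \<psi> s1 \<inter> \<psi> s2 = {}) \<and>
        (\<forall>c. \<forall>c' \<in> cfg_set \<psi> c. \<exists>d. FB c' = Some d \<and> d \<in> cfg_set \<psi> (FA c)))"

definition invariantly_simulates ::
  "('s \<Rightarrow> 's \<Rightarrow> 's \<Rightarrow> 's) \<Rightarrow> ('t \<Rightarrow> 't \<Rightarrow> 't \<Rightarrow> 't) \<Rightarrow> real \<Rightarrow> bool" where
  "invariantly_simulates f g r =
     (\<exists>(m::nat) (v::int) (k::nat) (l::nat).
        m > 0 \<and> k > 0 \<and> l > 0 \<and> real l / real k = r \<and>
        direct_sim {xs :: 't list. length xs = m}
          ((sync_global f) ^^ k)
          (\<lambda>c'. map_option (pack m) (opt_iter (H_map g) l (unpack m (translate v c')))))"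

end

theory Submission
  imports Defs
begin
definition decS :: "nat \<Rightarrow> 's::finite" where
  "decS = (SOME h. bij_betw h {0..<card (UNIV::'s set)} UNIV)"

lemma bij_decS: "bij_betw (decS :: nat \<Rightarrow> 's::finite) {0..<card (UNIV::'s set)} UNIV"
proof -
  have "\<exists>h. bij_betw h {0..<card (UNIV::'s set)} (UNIV::'s set)"
    by (rule ex_bij_betw_nat_finite) simp
  then show ?thesis unfolding decS_def by (rule someI_ex)
qed

definition encS :: "'s::finite \<Rightarrow> nat" where
  "encS = inv_into {0..<card (UNIV::'s set)} decS"

lemma encS_lt: "encS (a::'s::finite) < card (UNIV::'s set)"
proof -
  have "a \<in> decS ` {0..<card (UNIV::'s set)}"
    using bij_betw_imp_surj_on[OF bij_decS[where 's='s]] by simp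
  then have "inv_into {0..<card (UNIV::'s set)} decS a \<in> {0..<card (UNIV::'s set)}"
    by (rule inv_into_into)
  then show ?thesis unfolding encS_def by simp
qed

lemma dec_enc: "decS (encS (a::'s::finite)) = a"
proof -
  have "a \<in> decS ` {0..<card (UNIV::'s set)}"
    using bij_betw_imp_surj_on[OF bij_decS[where 's='s]] by simp
  then show ?thesis unfolding encS_def by (rule f_inv_into_f)
qed

lemma enc_dec: "k < card (UNIV::'s set) \<Longrightarrow> encS (decS k :: 's::finite) = k"
  unfolding encS_def
  by (rule inv_into_f_f[OF bij_betw_imp_inj_on[OF bij_decS[where 's='s]]]) simp

lemma mod3_ne: "(y::int) mod 3 \<noteq> (y + 2) mod 3" by presburger

definition plusS :: "'s::finite \<Rightarrow> 's \<Rightarrow> 's" where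
  "plusS a b = decS ((encS a + encS b) mod card (UNIV::'s set))"

definition minusS :: "'s::finite \<Rightarrow> 's \<Rightarrow> 's" where
  "minusS a b = decS ((encS a + (card (UNIV::'s set) - encS b)) mod card (UNIV::'s set))"

lemma minus_plus1: "minusS (plusS x y) y = (x::'s::finite)"
proof -
  let ?N = "card (UNIV::'s set)"
  have N: "0 < ?N" by (simp add: card_gt_0_iff)
  have ex: "encS x < ?N" and ey: "encS y < ?N" by (rule encS_lt)+
  have e1: "encS (plusS x y) = (encS x + encS y) mod ?N"
    unfolding plusS_def by (rule enc_dec) (simp add: N)
  have "(encS (plusS x y) + (?N - encS y)) mod ?N = ((encS x + encS y) + (?N - encS y)) mod ?N"
    unfolding e1 by (rule mod_add_left_eq)
  also have "(encS x + encS y) + (?N - encS y) = encS x + ?N" using ey by simp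
  also have "(encS x + ?N) mod ?N = encS x" using ex by simp
  finally show ?thesis unfolding minusS_def by (simp add: dec_enc)
qed

lemma minus_plus2: "minusS (plusS y z) y = (z::'s::finite)"
proof -
  let ?N = "card (UNIV::'s set)"
  have N: "0 < ?N" by (simp add: card_gt_0_iff)
  have ez: "encS z < ?N" and ey: "encS y < ?N" by (rule encS_lt)+
  have e1: "encS (plusS y z) = (encS y + encS z) mod ?N"
    unfolding plusS_def by (rule enc_dec) (simp add: N)
  have "(encS (plusS y z) + (?N - encS y)) mod ?N = ((encS y + encS z) + (?N - encS y)) mod ?N"
    unfolding e1 by (rule mod_add_left_eq)
  also have "(encS y + encS z) + (?N - encS y) = encS z + ?N" using ey by simp
  also have "(encS z + ?N) mod ?N = encS z" using ez by simp
  finally show ?thesis unfolding minusS_def by (simp add: dec_enc)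
qed

fun nxt :: "three \<Rightarrow> three" where
  "nxt Q1 = Q2" | "nxt Q2 = Q3" | "nxt Q3 = Q1"

definition ofI :: "int \<Rightarrow> three" where
  "ofI x = (if x mod 3 = 0 then Q1 else if x mod 3 = 1 then Q2 else Q3)"

lemma mod3_cases: "(x::int) mod 3 = 0 \<or> x mod 3 = 1 \<or> x mod 3 = 2" by presburger

lemma ofI_eq: "ofI x = ofI y \<longleftrightarrow> x mod 3 = y mod 3"
  using mod3_cases[of x] mod3_cases[of y] unfolding ofI_def by auto

lemma nxt_ofI: "nxt (ofI x) = ofI (x + 1)"
proof -
  have "x mod 3 = 0 \<and> (x+1) mod 3 = 1 \<or> x mod 3 = 1 \<and> (x+1) mod 3 = 2 \<or> x mod 3 = 2 \<and> (x+1) mod 3 = 0"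
    by presburger
  then show ?thesis unfolding ofI_def by auto
qed

lemma cond_iff:
  assumes "\<bar>tx - t\<bar> = 1"
  shows "ofI (a + tx) = nxt (ofI (a + t)) \<longleftrightarrow> tx = t + 1"
proof -
  have "ofI (a + tx) = nxt (ofI (a + t)) \<longleftrightarrow> (a + tx) mod 3 = (a + t + 1) mod 3"
    by (simp add: nxt_ofI ofI_eq add.assoc)
  also have "\<dots> \<longleftrightarrow> tx = t + 1"
  proof
    assume h: "(a + tx) mod 3 = (a + t + 1) mod 3"
    from assms have "tx = t + 1 \<or> tx = t - 1" by arith
    then show "tx = t + 1"
    proof
      assume "tx = t - 1"
      then have "a + t + 1 = a + tx + 2" by simp
      then have "(a + tx) mod 3 = (a + tx + 2) mod 3" using h by (simp add: add.commute)
      with mod3_ne show ?thesis by blast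
    qed
  qed (simp add: add.assoc)
  finally show ?thesis .
qed

fun Rl :: "('s::finite \<Rightarrow> 's \<Rightarrow> 's \<Rightarrow> 's) \<Rightarrow> three \<Rightarrow> 's \<Rightarrow> 's \<Rightarrow> 's \<Rightarrow> 's" where
  "Rl f Q1 a b c = plusS a b"
| "Rl f Q2 a b c = f (minusS a b) b (minusS c b)"
| "Rl f Q3 a b c = a"

definition fB :: "('s::finite \<Rightarrow> 's \<Rightarrow> 's \<Rightarrow> 's) \<Rightarrow> 's \<times> three \<Rightarrow> 's \<times> three \<Rightarrow> 's \<times> three \<Rightarrow> 's \<times> three" where
  "fB f x y z = (if snd x = nxt (snd y) \<and> snd z = nxt (snd y)
      then (Rl f (snd y) (fst x) (fst y) (fst z), nxt (nxt (snd y))) else y)"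

lemma fB_lab: "snd x = nxt (snd y) \<Longrightarrow> snd z = nxt (snd y) \<Longrightarrow> snd (fB f x y z) = nxt (nxt (snd y))"
  by (simp add: fB_def)

lemma fB_else: "\<not> (snd x = nxt (snd y) \<and> snd z = nxt (snd y)) \<Longrightarrow> fB f x y z = y"
  unfolding fB_def by (rule if_not_P)

definition pe :: "('t \<Rightarrow> 't \<Rightarrow> 't \<Rightarrow> 't) \<Rightarrow> (int \<Rightarrow> 't) \<Rightarrow> (int \<Rightarrow> 't)" where
  "pe g c = (\<lambda>j. if even j then g (c (j - 1)) (c j) (c (j + 1)) else c j)"

definition po :: "('t \<Rightarrow> 't \<Rightarrow> 't \<Rightarrow> 't) \<Rightarrow> (int \<Rightarrow> 't) \<Rightarrow> (int \<Rightarrow> 't)" where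
  "po g c = (\<lambda>j. if odd j then g (c (j - 1)) (c j) (c (j + 1)) else c j)"

definition sig :: "('t \<Rightarrow> 't \<Rightarrow> 't \<Rightarrow> 't) \<Rightarrow> (int \<Rightarrow> 't) \<Rightarrow> (int \<Rightarrow> 't)" where
  "sig g c = po g (pe g c)"

primrec Wc :: "('t \<Rightarrow> 't \<Rightarrow> 't \<Rightarrow> 't) \<Rightarrow> (int \<Rightarrow> 't) \<Rightarrow> nat \<Rightarrow> (int \<Rightarrow> 't)" where
  "Wc g d 0 = d"
| "Wc g d (Suc n) = sig g (Wc g d n)"

definition par :: "int \<Rightarrow> int" where "par j = (if even j then 0 else 1)"

lemma sig_lab:
  assumes "\<forall>k. snd (c k) = ofI (b + par k)"
  shows "snd (sig (fB f) c k) = ofI (b + 2 + par k)"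
proof -
  have pe_lab: "snd (pe (fB f) c k) = ofI (if even k then b + 2 else b + 1)" for k
  proof (cases "even k")
    case True
    have h1: "snd (c (k-1)) = nxt (snd (c k))" "snd (c (k+1)) = nxt (snd (c k))"
      using assms True by (simp_all add: par_def nxt_ofI)
    have "snd (pe (fB f) c k) = nxt (nxt (snd (c k)))"
      using True h1 by (simp add: pe_def fB_lab)
    also have "\<dots> = ofI (b + 2)" using assms True by (simp add: par_def nxt_ofI add.assoc)
    finally show ?thesis using True by simp
  next
    case False then show ?thesis using assms by (simp add: pe_def par_def)
  qed
  show ?thesis
  proof (cases "even k")
    case True then show ?thesis by (simp add: sig_def po_def pe_lab par_def)
  next
    case False
    have h1: "snd (pe (fB f) c (k-1)) = nxt (snd (pe (fB f) c k))"
       "snd (pe (fB f) c (k+1)) = nxt (snd (pe (fB f) c k))"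
      using False by (simp_all add: pe_lab nxt_ofI add.assoc)
    have "snd (sig (fB f) c k) = nxt (nxt (snd (pe (fB f) c k)))"
      using False h1 by (simp add: sig_def po_def fB_lab)
    also have "\<dots> = ofI (b + 3)" using False by (simp add: pe_lab nxt_ofI add.assoc)
    finally show ?thesis using False by (simp add: par_def add.assoc)
  qed
qed

definition good :: "(int \<Rightarrow> 's \<times> three) \<Rightarrow> int \<Rightarrow> bool" where
  "good d a = (\<forall>k. snd (d k) = ofI (a + par k))"

lemma W_lab:
  assumes "good d a"
  shows "snd (Wc (fB f) d n j) = ofI (a + 2 * int n + par j)"
proof (induction n arbitrary: j)
  case 0 then show ?case using assms by (simp add: good_def)
next
  case (Suc n)
  have "snd (Wc (fB f) d (Suc n) j) = ofI (a + 2 * int n + 2 + par j)"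
    using Suc.IH by (simp add: sig_lab)
  then show ?case by (simp add: algebra_simps)
qed

lemma W_Suc_even: "even j \<Longrightarrow> Wc g d (Suc n) j = g (Wc g d n (j-1)) (Wc g d n j) (Wc g d n (j+1))"
  by (simp add: sig_def po_def pe_def)

lemma W_Suc_odd: "odd j \<Longrightarrow> Wc g d (Suc n) j = g (Wc g d (Suc n) (j-1)) (Wc g d n j) (Wc g d (Suc n) (j+1))"
  by (simp add: sig_def po_def pe_def)


lemma card_Suc_filter:
  "card {u. u < Suc s \<and> P u} = card {u. u < s \<and> P u} + (if P s then 1 else 0)"
proof (cases "P s")
  case True
  have "{u. u < Suc s \<and> P u} = insert s {u. u < s \<and> P u}" using True by auto
  then show ?thesis using True by simp
next
  case False
  have "{u. u < Suc s \<and> P u} = {u. u < s \<and> P u}" using False less_Suc_eq by auto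
  then show ?thesis using False by simp
qed

lemma n_changes_0: "n_changes g \<zeta> d j 0 = 0"
  by (simp add: n_changes_def)

lemma n_changes_Suc: "n_changes g \<zeta> d j (Suc s) = n_changes g \<zeta> d j s +
   (if async_run g \<zeta> d (Suc s) j \<noteq> async_run g \<zeta> d s j then 1 else 0)"
  unfolding n_changes_def by (rule card_Suc_filter)

lemma par_diff: "\<bar>par j - par (j + 1)\<bar> = 1"
  by (simp add: par_def)

lemma nat_ivt:
  fixes h :: "nat \<Rightarrow> nat"
  assumes "h 0 = 0" "\<And>s. h (Suc s) \<le> h s + 1"
  shows "h s1 \<ge> t \<Longrightarrow> \<exists>s. h s = t"
proof (induction s1)
  case 0 then show ?case using assms(1) by (intro exI[of _ 0]) simp
next
  case (Suc s1)
  show ?case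
  proof (cases "h s1 \<ge> t")
    case True then show ?thesis using Suc.IH by blast
  next
    case False
    then have "h (Suc s1) = t" using Suc.prems assms(2)[of s1] by linarith
    then show ?thesis by blast
  qed
qed

context
  fixes f :: "'s::finite \<Rightarrow> 's \<Rightarrow> 's \<Rightarrow> 's" and \<zeta> :: "nat \<Rightarrow> int set"
    and d :: "int \<Rightarrow> 's \<times> three" and a :: int
  assumes gd: "good d a"
begin

definition tt :: "nat \<Rightarrow> int \<Rightarrow> int" where
  "tt s j = 2 * int (n_changes (fB f) \<zeta> d j s) + par j"

definition en :: "nat \<Rightarrow> int \<Rightarrow> bool" where
  "en s j = (tt s (j - 1) = tt s j + 1 \<and> tt s (j + 1) = tt s j + 1)"

lemma step_val:
  assumes IH: "\<forall>j. async_run (fB f) \<zeta> d s j = Wc (fB f) d (n_changes (fB f) \<zeta> d j s) j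
                  \<and> \<bar>tt s j - tt s (j+1)\<bar> = 1"
  shows "fB f (async_run (fB f) \<zeta> d s (j-1)) (async_run (fB f) \<zeta> d s j) (async_run (fB f) \<zeta> d s (j+1))
         = (if en s j then Wc (fB f) d (Suc (n_changes (fB f) \<zeta> d j s)) j else async_run (fB f) \<zeta> d s j)"
proof -
  let ?r = "async_run (fB f) \<zeta> d s"
  let ?c = "\<lambda>k. n_changes (fB f) \<zeta> d k s"
  have lab: "snd (?r k) = ofI (a + tt s k)" for k
    using IH W_lab[OF gd, of f "?c k" k] by (simp add: tt_def add.assoc)
  have d1: "\<bar>tt s (j-1) - tt s j\<bar> = 1" using IH[rule_format, of "j-1"] by simp
  have d2: "\<bar>tt s (j+1) - tt s j\<bar> = 1" using IH[rule_format, of j] by (simp add: abs_minus_commute)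
  have c1: "snd (?r (j-1)) = nxt (snd (?r j)) \<longleftrightarrow> tt s (j-1) = tt s j + 1"
    unfolding lab by (rule cond_iff[OF d1])
  have c2: "snd (?r (j+1)) = nxt (snd (?r j)) \<longleftrightarrow> tt s (j+1) = tt s j + 1"
    unfolding lab by (rule cond_iff[OF d2])
  show ?thesis
  proof (cases "en s j")
    case False
    have "\<not> (snd (?r (j-1)) = nxt (snd (?r j)) \<and> snd (?r (j+1)) = nxt (snd (?r j)))"
      using False c1 c2 by (simp add: en_def)
    then have "fB f (?r (j-1)) (?r j) (?r (j+1)) = ?r j" by (rule fB_else)
    then show ?thesis using False by simp
  next
    case True
    then have e1: "tt s (j-1) = tt s j + 1" and e2: "tt s (j+1) = tt s j + 1" by (auto simp: en_def)
    show ?thesis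
    proof (cases "even j")
      case ev: True
      have "?c (j-1) = ?c j" using e1 ev by (simp add: tt_def par_def)
      moreover have "?c (j+1) = ?c j" using e2 ev by (simp add: tt_def par_def)
      ultimately show ?thesis using True ev IH W_Suc_even[OF ev, of "fB f" d "?c j"] by simp
    next
      case od: False
      have "?c (j-1) = Suc (?c j)" using e1 od by (simp add: tt_def par_def)
      moreover have "?c (j+1) = Suc (?c j)" using e2 od by (simp add: tt_def par_def)
      ultimately show ?thesis using True od IH W_Suc_odd[OF od, of "fB f" d "?c j"] by simp
    qed
  qed
qed

lemma W_Suc_ne: "Wc (fB f) d (Suc n) j \<noteq> Wc (fB f) d n j"
proof
  assume "Wc (fB f) d (Suc n) j = Wc (fB f) d n j"
  then have "snd (Wc (fB f) d (Suc n) j) = snd (Wc (fB f) d n j)" by simp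
  then have "ofI (a + 2 * int (Suc n) + par j) = ofI (a + 2 * int n + par j)"
    by (simp only: W_lab[OF gd])
  then have "(a + 2 * int (Suc n) + par j) mod 3 = (a + 2 * int n + par j) mod 3"
    by (simp only: ofI_eq)
  moreover have "a + 2 * int (Suc n) + par j = (a + 2 * int n + par j) + 2" by simp
  ultimately have "(a + 2 * int n + par j) mod 3 = ((a + 2 * int n + par j) + 2) mod 3" by metis
  then show False using mod3_ne by blast
qed

lemma inv_all:
  "\<forall>j. async_run (fB f) \<zeta> d s j = Wc (fB f) d (n_changes (fB f) \<zeta> d j s) j
         \<and> \<bar>tt s j - tt s (j+1)\<bar> = 1"
proof (induction s)
  case 0
  show ?case by (simp add: n_changes_0 tt_def par_diff)
next
  case (Suc s)
  have run_Suc: "async_run (fB f) \<zeta> d (Suc s) j =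
      (if j \<in> \<zeta> s \<and> en s j then Wc (fB f) d (Suc (n_changes (fB f) \<zeta> d j s)) j
       else async_run (fB f) \<zeta> d s j)" for j
    using step_val[OF Suc.IH, of j] by (simp add: async_global_def)
  have cnt_Suc: "n_changes (fB f) \<zeta> d j (Suc s) = n_changes (fB f) \<zeta> d j s + (if j \<in> \<zeta> s \<and> en s j then 1 else 0)" for j
    using n_changes_Suc[of "fB f" \<zeta> d j s] run_Suc[of j] Suc.IH W_Suc_ne by auto
  have tt_Suc: "tt (Suc s) j = tt s j + (if j \<in> \<zeta> s \<and> en s j then 2 else 0)" for j
    using cnt_Suc[of j] by (simp add: tt_def)
  show ?case
  proof
    fix j
    have A: "async_run (fB f) \<zeta> d (Suc s) j = Wc (fB f) d (n_changes (fB f) \<zeta> d j (Suc s)) j"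
      using run_Suc[of j] cnt_Suc[of j] Suc.IH by auto
    have old: "\<bar>tt s j - tt s (j+1)\<bar> = 1" using Suc.IH by blast
    have x1: "en s j \<Longrightarrow> tt s (j+1) = tt s j + 1" by (simp add: en_def)
    have x2: "en s (j+1) \<Longrightarrow> tt s j = tt s (j+1) + 1" by (simp add: en_def)
    have "\<bar>tt (Suc s) j - tt (Suc s) (j+1)\<bar> = 1"
      using tt_Suc[of j] tt_Suc[of "j+1"] old x1 x2 by (auto split: if_splits)
    then show "async_run (fB f) \<zeta> d (Suc s) j = Wc (fB f) d (n_changes (fB f) \<zeta> d j (Suc s)) j
         \<and> \<bar>tt (Suc s) j - tt (Suc s) (j+1)\<bar> = 1" using A by blast
  qed
qed

lemma tt_Suc: "tt (Suc s) j = tt s j + (if j \<in> \<zeta> s \<and> en s j then 2 else 0)"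
proof -
  have run_Suc: "async_run (fB f) \<zeta> d (Suc s) j =
      (if j \<in> \<zeta> s \<and> en s j then Wc (fB f) d (Suc (n_changes (fB f) \<zeta> d j s)) j
       else async_run (fB f) \<zeta> d s j)"
    using step_val[OF inv_all[of s], of j] by (simp add: async_global_def)
  have "n_changes (fB f) \<zeta> d j (Suc s) = n_changes (fB f) \<zeta> d j s + (if j \<in> \<zeta> s \<and> en s j then 1 else 0)"
    using n_changes_Suc[of "fB f" \<zeta> d j s] run_Suc inv_all[of s] W_Suc_ne by auto
  then show ?thesis by (simp add: tt_def)
qed

lemma tt_diff: "\<bar>tt s j - tt s (j+1)\<bar> = 1"
  using inv_all by blast

lemma tt_mono: "s \<le> s' \<Longrightarrow> tt s j \<le> tt s' j"
proof (induction s' rule: dec_induct)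
  case base then show ?case by simp
next
  case (step n) then show ?case using tt_Suc[of n j] by simp
qed

lemma stay:
  assumes "tt s0 j = T" "tt s0 (j-1) = T+1" "tt s0 (j+1) = T+1"
  shows "tt (s0 + k) j \<ge> T + 1 \<or> (tt (s0+k) j = T \<and> tt (s0+k) (j-1) = T+1 \<and> tt (s0+k) (j+1) = T+1)"
proof (induction k)
  case 0 then show ?case using assms by simp
next
  case (Suc k)
  let ?s = "s0 + k"
  show ?case
  proof (cases "tt ?s j \<ge> T + 1")
    case True
    then show ?thesis using tt_mono[of ?s "Suc ?s" j] by simp
  next
    case False
    then have st: "tt ?s j = T" "tt ?s (j-1) = T+1" "tt ?s (j+1) = T+1" using Suc.IH by auto
    have n1: "\<not> en ?s (j+1)" using st by (simp add: en_def)
    have n2: "\<not> en ?s (j-1)" using st by (simp add: en_def)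
    have "tt (Suc ?s) (j+1) = T+1" using tt_Suc[of ?s "j+1"] n1 st by simp
    moreover have "tt (Suc ?s) (j-1) = T+1" using tt_Suc[of ?s "j-1"] n2 st by simp
    moreover have "tt (Suc ?s) j = T \<or> tt (Suc ?s) j = T + 2" using tt_Suc[of ?s j] st by simp
    ultimately show ?thesis by auto
  qed
qed

lemma live:
  assumes adm: "admissible_schedule \<zeta>"
  shows "\<exists>s. tt s j \<ge> int T"
proof (induction T arbitrary: j)
  case 0
  have "tt 0 j \<ge> 0" by (simp add: tt_def par_def)
  then show ?case by auto
next
  case (Suc T)
  obtain s1 where s1: "tt s1 (j-1) \<ge> int T" using Suc.IH by blast
  obtain s2 where s2: "tt s2 j \<ge> int T" using Suc.IH by blast
  obtain s3 where s3: "tt s3 (j+1) \<ge> int T" using Suc.IH by blast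
  define s0 where "s0 = max s1 (max s2 s3)"
  have "s1 \<le> s0" "s2 \<le> s0" "s3 \<le> s0" by (simp_all add: s0_def)
  have a1: "tt s0 (j-1) \<ge> int T" using s1 tt_mono[OF \<open>s1 \<le> s0\<close>, of "j-1"] by linarith
  have a2: "tt s0 j \<ge> int T" using s2 tt_mono[OF \<open>s2 \<le> s0\<close>, of j] by linarith
  have a3: "tt s0 (j+1) \<ge> int T" using s3 tt_mono[OF \<open>s3 \<le> s0\<close>, of "j+1"] by linarith
  show ?case
  proof (cases "tt s0 j \<ge> int (Suc T)")
    case True then show ?thesis by blast
  next
    case False
    then have e0: "tt s0 j = int T" using a2 by simp
    have "\<bar>tt s0 (j-1) - tt s0 j\<bar> = 1" using tt_diff[of s0 "j-1"] by simp
    then have e1: "tt s0 (j-1) = int T + 1" using a1 e0 by arith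
    have "\<bar>tt s0 j - tt s0 (j+1)\<bar> = 1" using tt_diff[of s0 j] by simp
    then have e3: "tt s0 (j+1) = int T + 1" using a3 e0 by arith
    have inf: "infinite {t. j \<in> \<zeta> t}" using adm by (simp add: admissible_schedule_def)
    have "\<exists>s'\<ge>s0. j \<in> \<zeta> s'"
    proof (rule ccontr)
      assume "\<not> (\<exists>s'\<ge>s0. j \<in> \<zeta> s')"
      then have "{t. j \<in> \<zeta> t} \<subseteq> {..<s0}" by (auto simp: not_le)
      then have "finite {t. j \<in> \<zeta> t}" by (rule finite_subset) simp
      with inf show False by simp
    qed
    then obtain s' where s': "s' \<ge> s0" "j \<in> \<zeta> s'" by blast
    obtain k where k: "s' = s0 + k" using s' le_Suc_ex by blast
    from stay[OF e0 e1 e3, of k] k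
    have "tt s' j \<ge> int T + 1 \<or> (tt s' j = int T \<and> tt s' (j-1) = int T+1 \<and> tt s' (j+1) = int T+1)"
      by simp
    then show ?thesis
    proof
      assume "tt s' j \<ge> int T + 1" then show ?thesis by (intro exI[of _ s']) simp
    next
      assume h: "tt s' j = int T \<and> tt s' (j-1) = int T+1 \<and> tt s' (j+1) = int T+1"
      then have "en s' j" by (simp add: en_def)
      then have "tt (Suc s') j = int T + 2" using tt_Suc[of s' j] s'(2) h by simp
      then show ?thesis by (intro exI[of _ "Suc s'"]) simp
    qed
  qed
qed

lemma hist:
  assumes adm: "admissible_schedule \<zeta>"
  shows "update_history (fB f) \<zeta> d t j = Some (Wc (fB f) d t j)"
proof -
  obtain s1 where "tt s1 j \<ge> int (2 * t)" using live[OF adm] by blast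
  then have "n_changes (fB f) \<zeta> d j s1 \<ge> t" by (simp add: tt_def par_def split: if_splits)
  then have ge: "(\<lambda>s. n_changes (fB f) \<zeta> d j s) s1 \<ge> t" by simp
  have h0: "(\<lambda>s. n_changes (fB f) \<zeta> d j s) 0 = 0" by (simp add: n_changes_0)
  have hS: "\<And>s. (\<lambda>s. n_changes (fB f) \<zeta> d j s) (Suc s) \<le> (\<lambda>s. n_changes (fB f) \<zeta> d j s) s + 1"
    by (simp add: n_changes_Suc)
  have ex: "\<exists>s. n_changes (fB f) \<zeta> d j s = t"
    using nat_ivt[OF h0 hS ge] by simp
  let ?s = "LEAST s. n_changes (fB f) \<zeta> d j s = t"
  have "n_changes (fB f) \<zeta> d j ?s = t" using ex by (rule LeastI_ex)
  then have "async_run (fB f) \<zeta> d ?s j = Wc (fB f) d t j" using inv_all[of ?s] by metis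
  then show ?thesis using ex by (simp add: update_history_def)
qed

end


lemma H_good:
  assumes gd: "good d a"
  shows "H_map (fB f) d = Some (sig (fB f) d)"
proof -
  have inv: "invariant_histories (fB f) d"
    unfolding invariant_histories_def
  proof (intro allI impI)
    fix \<zeta>1 \<zeta>2 assume h: "admissible_schedule \<zeta>1 \<and> admissible_schedule \<zeta>2"
    show "update_history (fB f) \<zeta>1 d = update_history (fB f) \<zeta>2 d"
      using hist[OF gd, of \<zeta>1] hist[OF gd, of \<zeta>2] h by (intro ext) simp
  qed
  have adm: "admissible_schedule (\<lambda>_. UNIV)" by (simp add: admissible_schedule_def)
  have u: "update_history (fB f) (\<lambda>_. UNIV) d 1 i = Some (Wc (fB f) d 1 i)" for i
    by (rule hist[OF gd adm])
  show ?thesis unfolding H_map_def using inv u by simp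
qed

lemma good_sig: assumes "good d a" shows "good (sig (fB f) d) (a + 2)"
  unfolding good_def using sig_lab[of d a f] assms by (simp add: good_def)

definition blk :: "(int \<Rightarrow> 'a) \<Rightarrow> (int \<Rightarrow> 'a) \<Rightarrow> int \<Rightarrow> 'a" where
  "blk A B j = (if even j then A (j div 2) else B (j div 2))"

lemma blk_even: "blk A B (2 * k) = A k" by (simp add: blk_def)
lemma blk_odd: "blk A B (2 * k + 1) = B k" by (simp add: blk_def)
lemma blk_m1: "blk A B (2 * k - 1) = B (k - 1)"
proof -
  have "2 * k - 1 = 2 * (k - 1) + 1" by simp
  then show ?thesis by (simp only: blk_odd)
qed
lemma blk_p2: "blk A B (2 + 2 * k) = A (k + 1)"
proof -
  have "2 + 2 * k = 2 * (k + 1)" by simp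
  then show ?thesis by (simp only: blk_even)
qed

lemma pe_blk: "pe g (blk A B) = blk (\<lambda>i. g (B (i - 1)) (A i) (B i)) B"
proof
  fix j :: int
  show "pe g (blk A B) j = blk (\<lambda>i. g (B (i - 1)) (A i) (B i)) B j"
  proof (cases "even j")
    case True
    then obtain k where k: "j = 2 * k" by (auto elim: evenE)
    show ?thesis unfolding k pe_def by (simp add: blk_even blk_odd blk_m1)
  next
    case False
    then obtain k where k: "j = 2 * k + 1" by (auto elim: oddE)
    show ?thesis unfolding k pe_def by (simp add: blk_odd)
  qed
qed

lemma po_blk: "po g (blk A B) = blk A (\<lambda>i. g (A i) (B i) (A (i + 1)))"
proof
  fix j :: int
  show "po g (blk A B) j = blk A (\<lambda>i. g (A i) (B i) (A (i + 1))) j"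
  proof (cases "even j")
    case True
    then obtain k where k: "j = 2 * k" by (auto elim: evenE)
    show ?thesis unfolding k po_def by (simp add: blk_even)
  next
    case False
    then obtain k where k: "j = 2 * k + 1" by (auto elim: oddE)
    have "2 * k + 1 - 1 = 2 * k" by simp
    then show ?thesis unfolding k po_def by (simp add: blk_odd blk_even blk_p2)
  qed
qed

lemma sig_blk: "sig g (blk A B) = blk (\<lambda>i. g (B (i - 1)) (A i) (B i))
    (\<lambda>i. g (g (B (i - 1)) (A i) (B i)) (B i) (g (B i) (A (i + 1)) (B (i + 1))))"
  by (simp add: sig_def pe_blk po_blk)

lemma step1: "sig (fB f) (blk (\<lambda>i. (e i, Q1)) (\<lambda>i. (e i, Q2)))
   = blk (\<lambda>i. (plusS (e (i - 1)) (e i), Q3)) (\<lambda>i. (sync_global f e i, Q1))"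
  by (simp add: sig_blk fB_def minus_plus1 minus_plus2 sync_global_def)

lemma step2: "sig (fB f) (blk (\<lambda>i. (p i, Q3)) (\<lambda>i. (u i, Q1)))
   = blk (\<lambda>i. (u (i - 1), Q2)) (\<lambda>i. (plusS (u (i - 1)) (u i), Q3))"
  by (simp add: sig_blk fB_def)

lemma step3: "sig (fB f) (blk (\<lambda>i. (u (i - 1), Q2)) (\<lambda>i. (plusS (u (i - 1)) (u i), Q3)))
   = blk (\<lambda>i. (sync_global f u (i - 1), Q1)) (\<lambda>i. (sync_global f u (i - 1), Q2))"
  by (simp add: sig_blk fB_def minus_plus1 minus_plus2 sync_global_def)

lemma sync_shift: "sync_global f (\<lambda>i. c (i + 1)) = (\<lambda>i. sync_global f c (i + 1))"
  by (simp add: sync_global_def algebra_simps)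

lemma unpack2: "unpack 2 x = blk (\<lambda>i. x i ! 0) (\<lambda>i. x i ! 1)"
proof
  fix j :: int
  show "unpack 2 x j = blk (\<lambda>i. x i ! 0) (\<lambda>i. x i ! 1) j"
    by (cases "even j") (simp_all add: unpack_def blk_def odd_iff_mod_2_eq_one even_iff_mod_2_eq_zero)
qed

lemma pack2: "pack 2 (blk A B) = (\<lambda>i. [A i, B i])"
proof
  fix i :: int
  have "[0..<2] = [0::nat, 1]" by (simp add: upt_rec)
  then show "pack 2 (blk A B) i = [A i, B i]"
    by (simp add: pack_def blk_even blk_odd)
qed


theorem mainTheorem4:
  fixes f :: "'s::finite \<Rightarrow> 's \<Rightarrow> 's \<Rightarrow> 's"
  shows "\<exists>f' :: ('s \<times> three) \<Rightarrow> ('s \<times> three) \<Rightarrow> ('s \<times> three) \<Rightarrow> ('s \<times> three).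
           invariantly_simulates f f' (3 / 2)"
proof -
  define \<psi> where "\<psi> = (\<lambda>s::'s. {[(s, Q1), (s, Q2)]})"
  let ?g = "fB f"
  have key: "\<forall>c. \<forall>c' \<in> cfg_set \<psi> c. \<exists>d. map_option (pack 2)
       (opt_iter (H_map ?g) 3 (unpack 2 (translate (-1) c'))) = Some d
       \<and> d \<in> cfg_set \<psi> ((sync_global f ^^ 2) c)"
  proof (intro allI ballI)
    fix c :: "int \<Rightarrow> 's" and c' assume "c' \<in> cfg_set \<psi> c"
    then have c': "c' i = [(c i, Q1), (c i, Q2)]" for i by (simp add: cfg_set_def \<psi>_def)
    define e where "e = (\<lambda>i. c (i + 1))"
    let ?D0 = "blk (\<lambda>i. (e i, Q1)) (\<lambda>i. (e i, Q2))"
    have d0: "unpack 2 (translate (-1) c') = ?D0"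
      by (simp add: unpack2 translate_def c' e_def)
    have g0: "good ?D0 0"
      unfolding good_def
    proof
      fix k :: int
      show "snd (?D0 k) = ofI (0 + par k)"
        by (cases "even k") (simp_all add: blk_def par_def ofI_def)
    qed
    have g1: "good (sig ?g ?D0) 2" using good_sig[OF g0] by simp
    have g2: "good (sig ?g (sig ?g ?D0)) 4" using good_sig[OF g1] by simp
    have it: "opt_iter (H_map ?g) 3 ?D0 = Some (sig ?g (sig ?g (sig ?g ?D0)))"
      using H_good[OF g0] H_good[OF g1] H_good[OF g2] by (simp add: numeral_3_eq_3)
    have s1: "sig ?g ?D0 = blk (\<lambda>i. (plusS (e (i - 1)) (e i), Q3)) (\<lambda>i. (sync_global f e i, Q1))"
      by (rule step1)
    have s2: "sig ?g (sig ?g ?D0) = blk (\<lambda>i. (sync_global f e (i - 1), Q2))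
        (\<lambda>i. (plusS (sync_global f e (i - 1)) (sync_global f e i), Q3))"
      unfolding s1 by (rule step2)
    have s3: "sig ?g (sig ?g (sig ?g ?D0)) = blk (\<lambda>i. (sync_global f (sync_global f e) (i - 1), Q1))
        (\<lambda>i. (sync_global f (sync_global f e) (i - 1), Q2))"
      unfolding s2 by (rule step3)
    have ee: "sync_global f (sync_global f e) (i - 1) = (sync_global f ^^ 2) c i" for i
      by (simp add: e_def sync_shift numeral_2_eq_2)
    show "\<exists>d. map_option (pack 2) (opt_iter (H_map ?g) 3 (unpack 2 (translate (-1) c'))) = Some d
       \<and> d \<in> cfg_set \<psi> ((sync_global f ^^ 2) c)"
      unfolding d0 it s3 by (simp add: pack2 ee cfg_set_def \<psi>_def)
  qed
  have ds: "direct_sim {xs :: ('s \<times> three) list. length xs = 2} ((sync_global f) ^^ 2)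
          (\<lambda>c'. map_option (pack 2) (opt_iter (H_map ?g) 3 (unpack 2 (translate (-1) c'))))"
    unfolding direct_sim_def
    by (rule exI[of _ \<psi>]) (use key in \<open>auto simp: \<psi>_def\<close>)
  show ?thesis
    unfolding invariantly_simulates_def
    by (rule exI[of _ ?g], rule exI[of _ 2], rule exI[of _ "-1"], rule exI[of _ 2], rule exI[of _ 3])
       (use ds in simp)
qed

end
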